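(* Let $f:\mathbb{R}^n\to\mathbb{R}$ be twice continuously differentiable and strongly convex on $\mathbb{R}^n$, with $\nabla^2 f(x)$ invertible for all $x\in\mathbb{R}^n$ and $\|\nabla f(x)\|$ radially unbounded; let $x^*$ be its minimizer. Let $\mu>1$, $k>0$ and consider the ODE $$\dot x=-\big(\nabla^2 f(x)\big)^{-1}\left(k\frac{\nabla f(x)}{\|\nabla f(x)\|^{2/\mu}}+k\frac{\nabla f(x)}{\|\nabla f(x)\|^{-2/\mu}}\right).$$ Then the solution of this ODE exists and is unique for all $x(0)\in\mathbb{R}^n$. Furthermore, given a prescribed settling time $T_p>0$ and letting $k=\frac{\mu\pi}{4T_p}$, the trajectories of the ODE are fixed-time-stable to the optimal solution $x^*$ of $\min_{x\in\mathbb{R}^n}f(x)$ with settling time $T\le T_p$.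
   Context: An ODE is fixed-time-stable to an equilibrium if it is globally asymptotically Lyapunov stable, every trajectory reaches the equilibrium in finite time, and the settling-time function (time to reach the equilibrium) is bounded by a constant independent of the initial condition. *)

theory Defs
  imports "HOL-Analysis.Analysis"
begin

definition strongly_convex_on :: "'a::real_normed_vector set \<Rightarrow> ('a \<Rightarrow> real) \<Rightarrow> bool" where
  "strongly_convex_on S f \<longleftrightarrow> convex S \<and> (\<exists>m>0. \<forall>x\<in>S. \<forall>y\<in>S. \<forall>t\<in>{0..1}.
     f ((1 - t) *\<^sub>R x + t *\<^sub>R y) \<le> (1 - t) * f x + t * f y - m / 2 * t * (1 - t) * (norm (x - y))\<^sup>2)"

text \<open>At points where grad f x = 0 (i.e. at the minimiser) the field evaluates to 0
  by Isabelle's conventions (0 powr a = 0, a / 0 = 0).\<close>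
definition ft_newton_field ::
  "('a::euclidean_space \<Rightarrow> 'a) \<Rightarrow> ('a \<Rightarrow> 'a \<Rightarrow>\<^sub>L 'a) \<Rightarrow> real \<Rightarrow> real \<Rightarrow> 'a \<Rightarrow> 'a" where
  "ft_newton_field g H \<mu> k x =
     - inv (blinfun_apply (H x))
         ((k / (norm (g x) powr (2 / \<mu>))) *\<^sub>R g x + (k / (norm (g x) powr (- 2 / \<mu>))) *\<^sub>R g x)"

definition ode_solution :: "('a::euclidean_space \<Rightarrow> 'a) \<Rightarrow> 'a \<Rightarrow> (real \<Rightarrow> 'a) \<Rightarrow> bool" where
  "ode_solution F x0 x \<longleftrightarrow> x 0 = x0 \<and>
     (\<forall>t\<ge>0. (\<lambda>s. F (x s)) absolutely_integrable_on {0..t} \<and>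
             x t = x0 + integral {0..t} (\<lambda>s. F (x s)))"

definition fixed_time_stable :: "('a::euclidean_space \<Rightarrow> 'a) \<Rightarrow> 'a \<Rightarrow> real \<Rightarrow> bool" where
  "fixed_time_stable F xe Tp \<longleftrightarrow>
     (\<forall>\<epsilon>>0. \<exists>\<delta>>0. \<forall>x0 x. ode_solution F x0 x \<and> dist x0 xe < \<delta> \<longrightarrow> (\<forall>t\<ge>0. dist (x t) xe < \<epsilon>)) \<and>
     (\<forall>x0 x. ode_solution F x0 x \<longrightarrow> (x \<longlongrightarrow> xe) at_top) \<and>
     (\<forall>x0 x. ode_solution F x0 x \<longrightarrow> (\<exists>T. 0 \<le> T \<and> T \<le> Tp \<and> (\<forall>t\<ge>T. x t = xe)))"

end

theory Submission
  imports Defs "HOL-Homology.Invariance_of_Domain"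
begin


lemma lin_piece:
  fixes h :: "real \<Rightarrow> real"
  assumes "0 \<le> a0" "a0 < b" "continuous_on {a0..b} h"
    and pos: "\<And>s. a0 < s \<Longrightarrow> s < b \<Longrightarrow> h s > 0"
    and der: "\<And>s. s > 0 \<Longrightarrow> h s > 0 \<Longrightarrow> (h has_real_derivative -c) (at s)"
  shows "h b = h a0 - c * (b - a0)"
proof -
  have "(\<lambda>s. h s + c * s) b = (\<lambda>s. h s + c * s) a0"
  proof (rule DERIV_isconst_end[of a0 b "\<lambda>s. h s + c * s"])
    show "continuous_on {a0..b} (\<lambda>s. h s + c * s)" using assms(3) by (intro continuous_intros)
    fix x assume x: "a0 < x" "x < b"
    then have "((\<lambda>s. h s + c * s) has_real_derivative (-c + c * 1)) (at x)"
      using assms(1) pos[OF x] by (intro derivative_intros der) auto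
    then show "((\<lambda>s. h s + c * s) has_real_derivative 0) (at x)" by simp
  qed fact
  then show ?thesis by (simp add: algebra_simps)
qed

lemma scalar_settle:
  fixes h :: "real \<Rightarrow> real" and c t :: real
  assumes cont: "\<And>T. continuous_on {0..T} h"
    and nn: "\<And>s. s \<ge> 0 \<Longrightarrow> h s \<ge> 0"
    and der: "\<And>s. s > 0 \<Longrightarrow> h s > 0 \<Longrightarrow> (h has_real_derivative -c) (at s)"
    and c: "c > 0" and t: "t \<ge> 0"
  shows "h t = max 0 (h 0 - c * t)"
proof (cases "t = 0")
  case True then show ?thesis using nn[of 0] by simp
next
  case False
  with t have t0: "t > 0" by simp
  define Z where "Z = {0..t} \<inter> h -` {0}"
  have clZ: "closed Z" unfolding Z_def by (rule continuous_closed_preimage[OF cont]) auto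
  have bZ: "bdd_above Z" "bdd_below Z" unfolding Z_def by auto
  have contI: "continuous_on {u..v} h" if "0 \<le> u" for u v
    by (rule continuous_on_subset[OF cont[of v]]) (use that in auto)
  show ?thesis
  proof (cases "h t > 0")
    case True
    show ?thesis
    proof (cases "Z = {}")
      case True
      have "h t = h 0 - c * (t - 0)"
      proof (rule lin_piece[of 0 t h, OF _ t0 cont _ der])
        fix s :: real assume "0 < s" "s < t"
        then have "s \<notin> Z" using True by auto
        then show "h s > 0" using nn[of s] \<open>0 < s\<close> \<open>s < t\<close> unfolding Z_def by force
      qed auto
      then show ?thesis using \<open>h t > 0\<close> by simp
    next
      case False
      define s1 where "s1 = Sup Z"
      have s1Z: "s1 \<in> Z" unfolding s1_def using closed_contains_Sup[OF False bZ(1) clZ] .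
      then have s1: "0 \<le> s1" "s1 \<le> t" "h s1 = 0" unfolding Z_def by auto
      with True have "s1 < t" using le_less by fastforce
      have "h t = h s1 - c * (t - s1)"
      proof (rule lin_piece[of s1 t h, OF s1(1) \<open>s1 < t\<close> contI[OF s1(1)] _ der])
        fix s :: real assume "s1 < s" "s < t"
        then have "s \<notin> Z" using cSup_upper[OF _ bZ(1), of s] unfolding s1_def by force
        then show "h s > 0" using nn[of s] s1 \<open>s1 < s\<close> \<open>s < t\<close> unfolding Z_def by force
      qed
      then have "h t < 0" using s1 \<open>s1 < t\<close> c by (simp add: mult_pos_pos)
      then show ?thesis using True by simp
    qed
  next
    case False
    then have ht: "h t = 0" using nn[OF t] by simp
    have "h 0 - c * t \<le> 0"
    proof (rule ccontr)
      assume "\<not> h 0 - c * t \<le> 0"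
      then have h0: "h 0 > c * t" by simp
      have "t \<in> Z" unfolding Z_def using ht t by auto
      then have ne: "Z \<noteq> {}" by auto
      define s0 where "s0 = Inf Z"
      have s0Z: "s0 \<in> Z" unfolding s0_def using closed_contains_Inf[OF ne bZ(2) clZ] .
      then have s0: "0 \<le> s0" "s0 \<le> t" "h s0 = 0" unfolding Z_def by auto
      have "s0 \<noteq> 0" using s0 h0 t0 c by (metis mult_pos_pos not_less_iff_gr_or_eq)
      then have "0 < s0" using s0 by simp
      have "h s0 = h 0 - c * (s0 - 0)"
      proof (rule lin_piece[of 0 s0 h, OF _ \<open>0 < s0\<close> cont _ der])
        fix s :: real assume "0 < s" "s < s0"
        then have "s \<notin> Z" using cInf_lower[OF _ bZ(2), of s] unfolding s0_def by force
        then show "h s > 0" using nn[of s] \<open>0 < s\<close> \<open>s < s0\<close> s0 unfolding Z_def by force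
      qed auto
      then have "c * s0 = h 0" using s0 by simp
      then have "c * s0 > c * t" using h0 by simp
      then have "s0 > t" using c by simp
      then show False using s0 by simp
    qed
    then show ?thesis using ht by simp
  qed
qed

locale ftn =
  fixes f :: "'a::euclidean_space \<Rightarrow> real"
    and g :: "'a \<Rightarrow> 'a"
    and H :: "'a \<Rightarrow> 'a \<Rightarrow>\<^sub>L 'a"
    and xs :: 'a
    and \<mu> :: real
  assumes grad: "\<And>x. (f has_derivative (\<lambda>h. g x \<bullet> h)) (at x)"
    and hess: "\<And>x. (g has_derivative blinfun_apply (H x)) (at x)"
    and hess_cont: "continuous_on UNIV H"
    and sconv: "strongly_convex_on UNIV f"
    and hess_inv: "\<And>x. bij (blinfun_apply (H x))"
    and minimizer: "\<And>x. f xs \<le> f x"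
    and mu: "\<mu> > 1"
begin

lemma g_cont: "continuous_on UNIV g"
  using hess has_derivative_continuous continuous_at_imp_continuous_on by blast

lemma sc_ineq: "\<exists>m>0. \<forall>x y. f x + g x \<bullet> (y - x) + m / 2 * (norm (y - x))\<^sup>2 \<le> f y"
proof -
  obtain m where m: "m > 0" and sc: "\<And>x y t. t \<in> {0..1} \<Longrightarrow>
     f ((1 - t) *\<^sub>R x + t *\<^sub>R y) \<le> (1 - t) * f x + t * f y - m / 2 * t * (1 - t) * (norm (x - y))\<^sup>2"
    using sconv unfolding strongly_convex_on_def by blast
  have "f x + g x \<bullet> (y - x) + m / 2 * (norm (y - x))\<^sup>2 \<le> f y" for x y
  proof -
    have D: "((\<lambda>t. f (x + t *\<^sub>R (y - x))) has_derivative (\<lambda>t. g x \<bullet> (t *\<^sub>R (y - x)))) (at 0)"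
    proof -
      have g0: "(f has_derivative (\<lambda>h. g x \<bullet> h)) (at (x + 0 *\<^sub>R (y - x)))" using grad[of x] by simp
      have l: "((\<lambda>t. x + t *\<^sub>R (y - x)) has_derivative (\<lambda>t. t *\<^sub>R (y - x))) (at 0)"
        by (auto intro!: derivative_eq_intros)
      show ?thesis using diff_chain_at[OF l g0] by (simp add: o_def)
    qed
    have "((\<lambda>t. f (x + t *\<^sub>R (y - x))) has_real_derivative (g x \<bullet> (y - x))) (at 0)"
      using D unfolding has_field_derivative_def by (rule has_derivative_eq_rhs) (auto simp: fun_eq_iff)
    hence L: "((\<lambda>h. (f (x + h *\<^sub>R (y - x)) - f x) / h) \<longlongrightarrow> g x \<bullet> (y - x)) (at_right 0)"
      unfolding DERIV_def by (auto intro: tendsto_mono at_le)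
    have R: "((\<lambda>h. f y - f x - m / 2 * (1 - h) * (norm (x - y))\<^sup>2) \<longlongrightarrow> f y - f x - m / 2 * (1 - 0) * (norm (x - y))\<^sup>2) (at_right 0)"
      by (intro tendsto_intros)
    have E: "\<forall>\<^sub>F h in at_right 0. (f (x + h *\<^sub>R (y - x)) - f x) / h \<le> f y - f x - m / 2 * (1 - h) * (norm (x - y))\<^sup>2"
      unfolding eventually_at_right_field
    proof (intro exI[of _ 1] conjI allI impI)
      fix h :: real assume h0: "0 < h" and h1: "h < 1"
      note h = h0 h1
      have "f (x + h *\<^sub>R (y - x)) \<le> (1 - h) * f x + h * f y - m / 2 * h * (1 - h) * (norm (x - y))\<^sup>2"
        using sc[of h x y] h by (simp add: algebra_simps)
      then show "(f (x + h *\<^sub>R (y - x)) - f x) / h \<le> f y - f x - m / 2 * (1 - h) * (norm (x - y))\<^sup>2"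
        using h by (simp add: divide_simps) (simp add: algebra_simps)
    qed simp
    have "g x \<bullet> (y - x) \<le> f y - f x - m / 2 * (1 - 0) * (norm (x - y))\<^sup>2"
      using tendsto_le[OF trivial_limit_at_right_real R L E] .
    then show ?thesis by (simp add: norm_minus_commute)
  qed
  with m show ?thesis by blast
qed

definition mc where "mc = (SOME m. m > 0 \<and> (\<forall>x y. f x + g x \<bullet> (y - x) + m / 2 * (norm (y - x))\<^sup>2 \<le> f y))"

lemma mc: "mc > 0" "\<And>x y. f x + g x \<bullet> (y - x) + mc / 2 * (norm (y - x))\<^sup>2 \<le> f y"
  using someI_ex[OF sc_ineq] unfolding mc_def[symmetric] by auto

lemma g_mono: "mc * (norm (x - y))\<^sup>2 \<le> (g x - g y) \<bullet> (x - y)"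
proof -
  have 1: "f x + g x \<bullet> (y - x) + mc / 2 * (norm (x - y))\<^sup>2 \<le> f y" using mc(2)[of x y] by (simp add: norm_minus_commute)
  have 2: "f y + g y \<bullet> (x - y) + mc / 2 * (norm (x - y))\<^sup>2 \<le> f x" by (rule mc(2))
  have aux: "\<And>a b c d e n::real. a + b + c / 2 * n \<le> d \<Longrightarrow> d + e + c / 2 * n \<le> a \<Longrightarrow> c * n \<le> - b - e"
    by linarith
  have "mc * (norm (x - y))\<^sup>2 \<le> - (g x \<bullet> (y - x)) - g y \<bullet> (x - y)" by (rule aux[OF 1 2])
  also have "\<dots> = (g x - g y) \<bullet> (x - y)" by (simp add: inner_diff_left inner_diff_right)
  finally show ?thesis .
qed

lemma g_lip: "mc * norm (x - y) \<le> norm (g x - g y)"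
proof (cases "x = y")
  case False
  have "mc * (norm (x - y))\<^sup>2 \<le> norm (g x - g y) * norm (x - y)"
    using g_mono[of x y] norm_cauchy_schwarz[of "g x - g y" "x - y"] by linarith
  then show ?thesis using False by (simp add: power2_eq_square)
qed simp

lemma g_inj: "inj g"
proof (rule injI)
  fix x y assume "g x = g y"
  then have "mc * norm (x - y) \<le> 0" using g_lip[of x y] by simp
  then show "x = y" using mc(1) by (simp add: mult_le_0_iff)
qed

lemma g_xs: "g xs = 0"
proof -
  have "(\<lambda>h. g xs \<bullet> h) = (\<lambda>v. 0)"
    by (rule differential_zero_maxmin[of xs UNIV f]) (use grad minimizer in auto)
  then have "g xs \<bullet> g xs = 0" by metis
  then show ?thesis by simp
qed

lemma H_lower: "mc * norm v \<le> norm (blinfun_apply (H y) v)"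
proof -
  define \<phi> where "\<phi> t = g (y + t *\<^sub>R v) \<bullet> v" for t
  have D: "(\<phi> has_real_derivative (blinfun_apply (H y) v \<bullet> v)) (at 0)"
  proof -
    have g0: "(g has_derivative blinfun_apply (H y)) (at (y + 0 *\<^sub>R v))" using hess[of y] by simp
    have l: "((\<lambda>t. y + t *\<^sub>R v) has_derivative (\<lambda>t. t *\<^sub>R v)) (at 0)"
      by (auto intro!: derivative_eq_intros)
    have "((\<lambda>t. g (y + t *\<^sub>R v)) has_derivative (\<lambda>t. blinfun_apply (H y) (t *\<^sub>R v))) (at 0)"
      using diff_chain_at[OF l g0] by (simp add: o_def)
    then have "(\<phi> has_derivative (\<lambda>t. blinfun_apply (H y) (t *\<^sub>R v) \<bullet> v)) (at 0)"
      unfolding \<phi>_def by (auto intro!: derivative_eq_intros)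
    then show ?thesis unfolding has_field_derivative_def
      by (rule has_derivative_eq_rhs) (auto simp: fun_eq_iff blinfun.scaleR_right)
  qed
  hence L: "((\<lambda>h. (\<phi> (0 + h) - \<phi> 0) / h) \<longlongrightarrow> blinfun_apply (H y) v \<bullet> v) (at_right 0)"
    unfolding DERIV_def by (auto intro: tendsto_mono at_le)
  have E: "\<forall>\<^sub>F h in at_right 0. mc * (norm v)\<^sup>2 \<le> (\<phi> (0 + h) - \<phi> 0) / h"
    unfolding eventually_at_right_field
  proof (intro exI[of _ 1] conjI allI impI)
    fix h :: real assume h0: "0 < h" and h1: "h < 1"
    have "mc * (norm (h *\<^sub>R v))\<^sup>2 \<le> (g (y + h *\<^sub>R v) - g y) \<bullet> (h *\<^sub>R v)"
      using g_mono[of "y + h *\<^sub>R v" y] by simp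
    then have "h * (mc * (norm v)\<^sup>2 * h) \<le> h * (\<phi> h - \<phi> 0)"
      using h0 by (simp add: \<phi>_def inner_diff_left power2_eq_square algebra_simps)
    then have "mc * (norm v)\<^sup>2 * h \<le> \<phi> h - \<phi> 0"
      using h0 by (simp add: mult_le_cancel_left_pos)
    then show "mc * (norm v)\<^sup>2 \<le> (\<phi> (0 + h) - \<phi> 0) / h"
      using h0 by (simp add: pos_le_divide_eq)
  qed simp
  have "mc * (norm v)\<^sup>2 \<le> blinfun_apply (H y) v \<bullet> v"
    using tendsto_le[OF trivial_limit_at_right_real L tendsto_const E] .
  also have "\<dots> \<le> norm (blinfun_apply (H y) v) * norm v" by (rule norm_cauchy_schwarz)
  finally show ?thesis
    by (cases "v = 0") (auto simp: power2_eq_square)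
qed

lemma Hinv: "blinfun_apply (H y) (inv_into UNIV (blinfun_apply (H y)) w) = w"
  using hess_inv[of y] by (simp add: bij_is_surj surj_f_inv_f)

lemma Hinv2: "inv_into UNIV (blinfun_apply (H y)) (blinfun_apply (H y) v) = v"
  using hess_inv[of y] by (simp add: bij_is_inj inv_f_f)

lemma Hinv_linear: "linear (inv_into UNIV (blinfun_apply (H y)))"
  using hess_inv[of y] by (intro inj_linear_imp_inv_linear) (auto simp: bij_def bounded_linear.linear[OF blinfun.bounded_linear_right])

lemma Hinv_bound: "norm (inv_into UNIV (blinfun_apply (H y)) w) \<le> norm w / mc"
  using H_lower[of "inv_into UNIV (blinfun_apply (H y)) w" y] mc(1) by (simp add: Hinv field_simps)

lemma g_surj: "surj g"
proof -
  have op: "open (range g)"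
    by (rule invariance_of_domain[OF g_cont open_UNIV]) (use g_inj in simp)
  have cl: "closed (range g)"
    unfolding closed_sequential_limits
  proof (intro allI impI)
    fix z l assume a: "(\<forall>n. z n \<in> range g) \<and> z \<longlonglongrightarrow> l"
    define p where "p n = inv_into UNIV g (z n)" for n
    have p: "z n = g (p n)" for n using a by (simp add: p_def f_inv_into_f)
    have "Cauchy z" using a by (blast intro: LIMSEQ_imp_Cauchy)
    have "Cauchy p"
      unfolding Cauchy_def
    proof (intro allI impI)
      fix e :: real assume e: "e > 0"
      obtain M where M: "\<And>m n. m \<ge> M \<Longrightarrow> n \<ge> M \<Longrightarrow> dist (z m) (z n) < mc * e"
        using \<open>Cauchy z\<close> e mc(1) unfolding Cauchy_def by (meson mult_pos_pos)
      show "\<exists>M. \<forall>m\<ge>M. \<forall>n\<ge>M. dist (p m) (p n) < e"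
      proof (intro exI allI impI)
        fix m n assume "m \<ge> M" "n \<ge> M"
        then have "mc * dist (p m) (p n) < mc * e"
          using M[of m n] g_lip[of "p m" "p n"] p by (simp add: dist_norm)
        then show "dist (p m) (p n) < e" using mc(1) by simp
      qed
    qed
    then obtain q where q: "p \<longlonglongrightarrow> q" using Cauchy_convergent_iff convergent_def by blast
    have "(\<lambda>n. g (p n)) \<longlonglongrightarrow> g q"
      by (rule continuous_on_tendsto_compose[OF g_cont q]) auto
    moreover have "z = (\<lambda>n. g (p n))" using p by auto
    ultimately have "z \<longlonglongrightarrow> g q" by simp
    then have "l = g q" using a LIMSEQ_unique by blast
    then show "l \<in> range g" by simp
  qed
  have "range g = {} \<or> range g = UNIV" using clopen[of "range g"] op cl by blast
  then show ?thesis by auto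
qed

definition a where "a = 2 / \<mu>"

lemma a_pos: "0 < a" and a_lt: "a < 2"
  using mu by (auto simp: a_def divide_simps)

abbreviation Hi where "Hi y \<equiv> inv_into UNIV (blinfun_apply (H y))"

definition cf :: "real \<Rightarrow> 'a \<Rightarrow> real" where
  "cf k z = k / (norm z powr a) + k * (norm z powr a)"

lemma F_eq: "ft_newton_field g H \<mu> k y = - Hi y (cf k (g y) *\<^sub>R g y)"
proof -
  have "- 2 / \<mu> = - a" by (simp add: a_def)
  then have "k / (norm (g y) powr (- 2 / \<mu>)) = k * norm (g y) powr a"
    by (cases "g y = 0") (simp_all add: powr_minus divide_inverse)
  then show ?thesis unfolding ft_newton_field_def cf_def
    by (simp add: scaleR_add_left a_def)
qed

lemma F_xs: "ft_newton_field g H \<mu> k xs = 0"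
  unfolding F_eq g_xs using linear_0[OF Hinv_linear] by simp

lemma F_cont:
  assumes gy: "g y \<noteq> 0"
  shows "isCont (ft_newton_field g H \<mu> k) y"
proof -
  define w where "w y' = cf k (g y') *\<^sub>R g y'" for y'
  define v where "v = Hi y (w y)"
  have Hv: "blinfun_apply (H y) v = w y" unfolding v_def by (rule Hinv)
  have gt: "(g \<longlongrightarrow> g y) (at y)" using g_cont by (simp add: continuous_on_def)
  have Ht: "(H \<longlongrightarrow> H y) (at y)" using hess_cont by (simp add: continuous_on_def)
  have wt: "(w \<longlongrightarrow> w y) (at y)"
    unfolding w_def cf_def using gy a_pos
    by (intro tendsto_intros gt) auto
  have bt: "((\<lambda>y'. norm (w y' - w y) / mc + norm (H y - H y') * norm v / mc) \<longlongrightarrow>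
      norm (w y - w y) / mc + norm (H y - H y) * norm v / mc) (at y)"
    using mc(1) by (intro tendsto_intros wt Ht) auto
  have bound: "norm (Hi y' (w y') - Hi y (w y)) \<le> norm (w y' - w y) / mc + norm (H y - H y') * norm v / mc" for y'
  proof -
    have L: "linear (Hi y')" by (rule Hinv_linear)
    have "Hi y' (w y') - Hi y (w y) = Hi y' (w y' - w y) + Hi y' (blinfun_apply (H y) v - blinfun_apply (H y') v)"
      using Hv by (simp add: linear_diff[OF L] Hinv2 v_def[symmetric])
    also have "norm \<dots> \<le> norm (Hi y' (w y' - w y)) + norm (Hi y' (blinfun_apply (H y) v - blinfun_apply (H y') v))"
      by (rule norm_triangle_ineq)
    also have "\<dots> \<le> norm (w y' - w y) / mc + norm (blinfun_apply (H y) v - blinfun_apply (H y') v) / mc"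
      by (intro add_mono Hinv_bound)
    also have "norm (blinfun_apply (H y) v - blinfun_apply (H y') v) \<le> norm (H y - H y') * norm v"
      by (metis blinfun.diff_left norm_blinfun)
    finally show ?thesis using mc(1) by (simp add: divide_right_mono)
  qed
  have "((\<lambda>y'. Hi y' (w y') - Hi y (w y)) \<longlongrightarrow> 0) (at y)"
    by (rule Lim_null_comparison[OF always_eventually[OF allI[OF bound]]]) (use bt in simp)
  then have "((\<lambda>y'. Hi y' (w y')) \<longlongrightarrow> Hi y (w y)) (at y)"
    by (simp add: Lim_null[symmetric])
  then have "((\<lambda>y'. - Hi y' (w y')) \<longlongrightarrow> - Hi y (w y)) (at y)"
    by (intro tendsto_intros)
  then show ?thesis unfolding isCont_def F_eq w_def .
qed

abbreviation Fk where "Fk k \<equiv> ft_newton_field g H \<mu> k"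

lemma g_zero_iff: "g y = 0 \<longleftrightarrow> y = xs"
  using g_inj g_xs by (metis injD)

lemma sol_int:
  assumes "ode_solution (Fk k) x0 y" "T \<ge> 0"
  shows "(\<lambda>s. Fk k (y s)) integrable_on {0..T}"
  using assms unfolding ode_solution_def absolutely_integrable_on_def by blast

lemma sol_cont:
  assumes sol: "ode_solution (Fk k) x0 y"
  shows "continuous_on {0..T} y"
proof (cases "T \<ge> 0")
  case True
  have "continuous_on {0..T} (\<lambda>u. x0 + integral {0..u} (\<lambda>s. Fk k (y s)))"
    by (intro continuous_intros indefinite_integral_continuous_1 sol_int[OF sol True])
  then show ?thesis
    by (rule continuous_on_eq) (use sol in \<open>auto simp: ode_solution_def\<close>)
qed simp

lemma sol_deriv:
  assumes sol: "ode_solution (Fk k) x0 y" and t: "t > 0" and yt: "y t \<noteq> xs"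
  shows "(y has_vector_derivative Fk k (y t)) (at t)"
proof -
  define T where "T = t + 1"
  have T: "T \<ge> 0" "t < T" using t by (auto simp: T_def)
  have int: "(\<lambda>s. Fk k (y s)) integrable_on {0..T}" by (rule sol_int[OF sol T(1)])
  have cy: "continuous (at t within {0..T}) y"
    using sol_cont[OF sol, of T] t T by (simp add: continuous_on_eq_continuous_within)
  have gy: "g (y t) \<noteq> 0" using yt g_zero_iff by simp
  have cF: "continuous (at t within {0..T} - {}) (\<lambda>s. Fk k (y s))"
    using continuous_within_compose3[OF F_cont[OF gy] cy] by simp
  have "((\<lambda>u. integral {0..u} (\<lambda>s. Fk k (y s))) has_vector_derivative Fk k (y t)) (at t within {0..T} - {})"
    by (rule integral_has_vector_derivative_continuous_at[OF int _ finite.emptyI cF]) (use t T in auto)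
  then have "((\<lambda>u. integral {0..u} (\<lambda>s. Fk k (y s))) has_vector_derivative Fk k (y t)) (at t)"
    using at_within_Icc_at[of 0 t T] t T by simp
  then have "((\<lambda>u. integral {0..u} (\<lambda>s. Fk k (y s)) + x0) has_vector_derivative Fk k (y t)) (at t)"
    by (simp add: has_vector_derivative_add_const)
  then show ?thesis
  proof (rule has_vector_derivative_transform_within_open)
    show "open {0<..<T}" by simp
    show "t \<in> {0<..<T}" using t T by simp
    fix u assume "u \<in> {0<..<T}"
    then show "integral {0..u} (\<lambda>s. Fk k (y s)) + x0 = y u"
      using sol unfolding ode_solution_def by (simp add: add.commute)
  qed
qed

lemma z_deriv:
  assumes yd: "(y has_vector_derivative Fk k (y t)) (at t)"
  shows "((\<lambda>s. g (y s)) has_vector_derivative - (cf k (g (y t)) *\<^sub>R g (y t))) (at t)"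
proof -
  have "((g \<circ> y) has_derivative (blinfun_apply (H (y t)) \<circ> (\<lambda>x. x *\<^sub>R Fk k (y t)))) (at t)"
    using yd hess[of "y t"] unfolding has_vector_derivative_def by (rule diff_chain_at)
  moreover have "blinfun_apply (H (y t)) (Fk k (y t)) = - (cf k (g (y t)) *\<^sub>R g (y t))"
    unfolding F_eq by (simp add: blinfun.minus_right Hinv)
  ultimately show ?thesis unfolding has_vector_derivative_def
    by (simp add: o_def blinfun.scaleR_right)
qed

lemma n_deriv:
  assumes yd: "(y has_vector_derivative Fk k (y t)) (at t)" and gy: "g (y t) \<noteq> 0"
  shows "((\<lambda>s. norm (g (y s))) has_real_derivative - (cf k (g (y t)) * norm (g (y t)))) (at t)"
proof -
  let ?z = "g (y t)"
  have D: "((norm \<circ> (\<lambda>s. g (y s))) has_derivative ((\<lambda>h. h \<bullet> sgn ?z) \<circ> (\<lambda>x. x *\<^sub>R - (cf k ?z *\<^sub>R ?z)))) (at t)"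
    using z_deriv[OF yd] has_derivative_norm[OF gy] unfolding has_vector_derivative_def by (rule diff_chain_at)
  have zz: "?z \<bullet> ?z = norm ?z * norm ?z" by (simp add: dot_square_norm power2_eq_square)
  have zs: "?z \<bullet> sgn ?z = norm ?z" using gy by (simp add: sgn_div_norm zz)
  have E: "(x *\<^sub>R - (cf k ?z *\<^sub>R ?z)) \<bullet> sgn ?z = x * - (cf k ?z * norm ?z)" for x
    using gy by (simp add: sgn_div_norm zz)
  show ?thesis unfolding has_field_derivative_def
    using D[unfolded o_def] by (rule has_derivative_eq_rhs) (auto simp: fun_eq_iff E zs mult.commute)
qed

lemma h_deriv:
  assumes yd: "(y has_vector_derivative Fk k (y t)) (at t)" and yt: "y t \<noteq> xs"
  shows "((\<lambda>s. arctan (norm (g (y s)) powr a)) has_real_derivative - (a * k)) (at t)"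
proof -
  let ?z = "g (y t)"
  let ?r = "norm ?z"
  let ?p = "?r powr a"
  have gy: "?z \<noteq> 0" using yt g_zero_iff by simp
  then have r: "?r > 0" by simp
  then have p: "?p > 0" by simp
  have pd: "((\<lambda>s. norm (g (y s)) powr a) has_real_derivative a * ?r powr (a - of_nat 1) * - (cf k ?z * ?r)) (at t)"
    by (rule DERIV_fun_powr[OF n_deriv[OF yd gy] r])
  have hd: "((\<lambda>s. arctan (norm (g (y s)) powr a)) has_real_derivative
      inverse (1 + ?p\<^sup>2) * (a * ?r powr (a - of_nat 1) * - (cf k ?z * ?r))) (at t)"
    by (rule DERIV_chain2[OF DERIV_arctan pd])
  have e1: "?r powr (a - of_nat 1) * ?r = ?p"
    using r by (simp add: powr_diff)
  have e2: "(k / ?p + k * ?p) * ?p = k * (1 + ?p\<^sup>2)"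
    using p by (simp add: field_simps power2_eq_square)
  have e3: "inverse (1 + ?p\<^sup>2) * (k * (1 + ?p\<^sup>2)) = k"
  proof -
    have "0 < 1 + ?p\<^sup>2" by (intro add_pos_nonneg) auto
    then show ?thesis by simp
  qed
  have "inverse (1 + ?p\<^sup>2) * (a * ?r powr (a - of_nat 1) * - (cf k ?z * ?r))
      = - (a * (inverse (1 + ?p\<^sup>2) * (cf k ?z * (?r powr (a - of_nat 1) * ?r))))"
    by (simp add: algebra_simps)
  also have "\<dots> = - (a * (inverse (1 + ?p\<^sup>2) * ((k / ?p + k * ?p) * ?p)))"
    unfolding e1 cf_def ..
  also have "\<dots> = - (a * k)" unfolding e2 e3 ..
  finally have X: "inverse (1 + ?p\<^sup>2) * (a * ?r powr (a - of_nat 1) * - (cf k ?z * ?r)) = - (a * k)" .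
  show ?thesis using hd unfolding X .
qed

lemma sol_h:
  assumes sol: "ode_solution (Fk k) x0 y" and k: "k > 0" and t: "t \<ge> 0"
  shows "arctan (norm (g (y t)) powr a) = max 0 (arctan (norm (g x0) powr a) - a * k * t)"
proof -
  have y0: "y 0 = x0" using sol by (simp add: ode_solution_def)
  have "(\<lambda>s. arctan (norm (g (y s)) powr a)) t = max 0 ((\<lambda>s. arctan (norm (g (y s)) powr a)) 0 - (a * k) * t)"
  proof (rule scalar_settle[where c = "a * k"])
    fix T :: real
    have "continuous_on {0..T} (\<lambda>s. g (y s))"
      using continuous_on_compose2[OF g_cont sol_cont[OF sol, of T]] by simp
    then show "continuous_on {0..T} (\<lambda>s. arctan (norm (g (y s)) powr a))"
      using a_pos by (intro continuous_intros continuous_on_powr') auto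
  next
    fix s :: real assume "0 < s" and hs: "0 < arctan (norm (g (y s)) powr a)"
    then have "y s \<noteq> xs" using g_xs by auto
    then show "((\<lambda>s. arctan (norm (g (y s)) powr a)) has_real_derivative - (a * k)) (at s)"
      using h_deriv sol_deriv[OF sol \<open>0 < s\<close>] by blast
  qed (use t k a_pos in auto)
  then show ?thesis using y0 by simp
qed

lemma h_pos_iff: "arctan (norm (g y) powr a) > 0 \<longleftrightarrow> y \<noteq> xs"
  using g_zero_iff by auto

lemma sol_dir:
  assumes sol: "ode_solution (Fk k) x0 y" and k: "k > 0" and t: "t \<ge> 0" and yt: "y t \<noteq> xs"
  shows "sgn (g (y t)) = sgn (g x0)"
proof -
  define \<theta> where "\<theta> = arctan (norm (g x0) powr a)"
  have y0: "y 0 = x0" using sol by (simp add: ode_solution_def)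
  have ak: "a * k > 0" using a_pos k by simp
  have "max 0 (\<theta> - a * k * t) > 0" using sol_h[OF sol k t] yt h_pos_iff unfolding \<theta>_def by metis
  then have th: "\<theta> - a * k * t > 0" by simp
  have nz: "y s \<noteq> xs" if "0 \<le> s" "s \<le> t" for s
  proof -
    have "a * k * s \<le> a * k * t" using that ak by (simp add: mult_left_mono)
    then have "max 0 (\<theta> - a * k * s) > 0" using th by simp
    then show ?thesis using sol_h[OF sol k that(1)] h_pos_iff unfolding \<theta>_def by metis
  qed
  show ?thesis
  proof (cases "t = 0")
    case True then show ?thesis using y0 by simp
  next
    case False
    with t have t0: "t > 0" by simp
    have cz: "continuous_on {0..t} (\<lambda>s. g (y s))"
      using continuous_on_compose2[OF g_cont sol_cont[OF sol, of t]] by simp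
    have "sgn (g (y t)) \<bullet> i = sgn (g (y 0)) \<bullet> i" if i: "i \<in> Basis" for i
    proof -
      have "(\<lambda>s. (g (y s) \<bullet> i) / norm (g (y s))) t = (\<lambda>s. (g (y s) \<bullet> i) / norm (g (y s))) 0"
      proof (rule DERIV_isconst_end[OF t0])
        show "continuous_on {0..t} (\<lambda>s. (g (y s) \<bullet> i) / norm (g (y s)))"
          using nz g_zero_iff by (intro continuous_intros cz) auto
      next
        fix s :: real assume s: "0 < s" "s < t"
        then have ys: "y s \<noteq> xs" using nz by simp
        then have gs: "g (y s) \<noteq> 0" using g_zero_iff by simp
        have yd: "(y has_vector_derivative Fk k (y s)) (at s)" by (rule sol_deriv[OF sol s(1) ys])
        have zi: "((\<lambda>s. g (y s) \<bullet> i) has_real_derivative (- (cf k (g (y s)) *\<^sub>R g (y s))) \<bullet> i) (at s)"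
        proof -
          have "((\<lambda>s. g (y s) \<bullet> i) has_derivative (\<lambda>x. (x *\<^sub>R - (cf k (g (y s)) *\<^sub>R g (y s))) \<bullet> i)) (at s)"
            using z_deriv[OF yd] unfolding has_vector_derivative_def by (rule has_derivative_inner_left)
          then show ?thesis unfolding has_field_derivative_def
            by (rule has_derivative_eq_rhs) (auto simp: fun_eq_iff)
        qed
        have "((\<lambda>s. (g (y s) \<bullet> i) / norm (g (y s))) has_real_derivative
          (((- (cf k (g (y s)) *\<^sub>R g (y s))) \<bullet> i) * norm (g (y s)) - (g (y s) \<bullet> i) * (- (cf k (g (y s)) * norm (g (y s)))))
            / (norm (g (y s)) * norm (g (y s)))) (at s)"
          by (rule DERIV_divide[OF zi n_deriv[OF yd gs]]) (use gs in simp)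
        then show "((\<lambda>s. (g (y s) \<bullet> i) / norm (g (y s))) has_real_derivative 0) (at s)"
          by (simp add: algebra_simps)
      qed
      then show ?thesis by (simp add: sgn_div_norm divide_inverse mult.commute)
    qed
    then show ?thesis using y0 by (metis euclidean_eqI)
  qed
qed

definition \<rho> :: "real \<Rightarrow> 'a \<Rightarrow> real \<Rightarrow> real" where
  "\<rho> k x0 t = tan (max 0 (arctan (norm (g x0) powr a) - a * k * t)) powr (1 / a)"

lemma sol_char:
  assumes sol: "ode_solution (Fk k) x0 y" and k: "k > 0" and t: "t \<ge> 0"
  shows "g (y t) = \<rho> k x0 t *\<^sub>R sgn (g x0)"
proof (cases "y t = xs")
  case True
  then have "max 0 (arctan (norm (g x0) powr a) - a * k * t) = 0"
    using sol_h[OF sol k t] g_xs by simp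
  then show ?thesis using True g_xs by (simp add: \<rho>_def)
next
  case False
  let ?r = "norm (g (y t))"
  have r: "?r > 0" using False g_zero_iff by simp
  have "tan (max 0 (arctan (norm (g x0) powr a) - a * k * t)) = ?r powr a"
    using sol_h[OF sol k t, symmetric] by (simp add: tan_arctan)
  then have "\<rho> k x0 t = ?r"
    unfolding \<rho>_def using r a_pos by (simp add: powr_powr)
  moreover have "g (y t) = ?r *\<^sub>R sgn (g (y t))" using r by (simp add: sgn_div_norm)
  ultimately show ?thesis using sol_dir[OF sol k t False] by simp
qed

definition ginv where "ginv = inv_into UNIV g"

lemma g_ginv: "g (ginv z) = z"
  unfolding ginv_def using g_surj by (simp add: surj_f_inv_f)

lemma ginv_g: "ginv (g x) = x"
  unfolding ginv_def using g_inj by (simp add: inv_f_f)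

lemma ginv_deriv: "(ginv has_derivative Hi (ginv z)) (at z)"
proof -
  have "(ginv has_derivative Hi (ginv z)) (at (g (ginv z)))"
    by (rule has_derivative_inverse_strong[of UNIV "ginv z" g ginv "blinfun_apply (H (ginv z))" "Hi (ginv z)"])
       (auto simp: g_cont ginv_g hess fun_eq_iff Hinv)
  then show ?thesis by (simp add: g_ginv)
qed

lemma ginv_cont: "continuous_on UNIV ginv"
  using ginv_deriv has_derivative_continuous continuous_at_imp_continuous_on by blast

lemma ginv_0: "ginv 0 = xs"
  using ginv_g[of xs] g_xs by simp

lemma rho_deriv:
  assumes k: "k > 0" and s: "0 \<le> s" "s < arctan (norm (g x0) powr a) / (a * k)"
  shows "(\<rho> k x0 has_real_derivative - (cf k (\<rho> k x0 s *\<^sub>R sgn (g x0)) * \<rho> k x0 s)) (at s)"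
proof -
  define \<theta> where "\<theta> = arctan (norm (g x0) powr a)"
  have ak: "a * k > 0" using a_pos k by simp
  have th: "\<theta> < pi / 2" unfolding \<theta>_def using arctan_bounded by blast
  define u where "u = \<theta> - a * k * s"
  have u: "0 < u" "u < pi / 2"
  proof -
    have "a * k * s < \<theta>" using s(2) ak unfolding \<theta>_def by (simp add: pos_less_divide_eq mult.commute)
    then show "0 < u" unfolding u_def by simp
    have "0 \<le> a * k * s" using ak s(1) by simp
    then show "u < pi / 2" unfolding u_def using th by simp
  qed
  have cu: "cos u \<noteq> 0" using cos_gt_zero_pi[of u] u by simp
  define q where "q = tan u"
  have q: "q > 0" unfolding q_def using tan_gt_zero u by simp
  have D1: "((\<lambda>s'. \<theta> - a * k * s') has_real_derivative - (a * k)) (at s)"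
    by (auto intro!: derivative_eq_intros)
  have D2: "((\<lambda>s'. tan (\<theta> - a * k * s')) has_real_derivative inverse ((cos u)\<^sup>2) * - (a * k)) (at s)"
    using DERIV_chain2[OF DERIV_tan D1] cu unfolding u_def by simp
  have D3: "((\<lambda>s'. tan (\<theta> - a * k * s') powr (1 / a)) has_real_derivative
      (1 / a) * q powr (1 / a - of_nat 1) * (inverse ((cos u)\<^sup>2) * - (a * k))) (at s)"
    using DERIV_fun_powr[OF D2, of "1 / a"] q unfolding q_def u_def by simp
  have rho_s: "\<rho> k x0 s = q powr (1 / a)"
    unfolding \<rho>_def q_def u_def \<theta>_def[symmetric] using u unfolding u_def by simp
  have nsg: "norm (sgn (g x0)) = 1"
  proof -
    have "\<theta> > 0" using u ak s(1) unfolding u_def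
      by (smt (verit, ccfv_SIG) mult_nonneg_nonneg)
    then have "g x0 \<noteq> 0" unfolding \<theta>_def by auto
    then show ?thesis by (simp add: norm_sgn)
  qed
  have nrho: "norm (\<rho> k x0 s *\<^sub>R sgn (g x0)) = q powr (1 / a)"
    using nsg rho_s by simp
  have qa: "(q powr (1 / a)) powr a = q"
    using q a_pos by (simp add: powr_powr)
  have val: "(1 / a) * q powr (1 / a - of_nat 1) * (inverse ((cos u)\<^sup>2) * - (a * k))
      = - (cf k (\<rho> k x0 s *\<^sub>R sgn (g x0)) * \<rho> k x0 s)"
  proof -
    have e1: "inverse ((cos u)\<^sup>2) = 1 + q\<^sup>2" unfolding q_def using tan_sec[OF cu] by (simp add: power_inverse)
    have e2: "q powr (1 / a - of_nat 1) = q powr (1 / a) / q" using q by (simp add: powr_diff)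
    have ce: "cf k (\<rho> k x0 s *\<^sub>R sgn (g x0)) = k / q + k * q"
      unfolding cf_def nrho qa ..
    show ?thesis unfolding ce unfolding e1 e2 rho_s using q a_pos
      by (simp add: field_simps power2_eq_square)
  qed
  have D4: "((\<lambda>s'. tan (\<theta> - a * k * s') powr (1 / a)) has_real_derivative
      - (cf k (\<rho> k x0 s *\<^sub>R sgn (g x0)) * \<rho> k x0 s)) (at s)"
    using D3 unfolding val .
  show ?thesis
  proof (rule has_field_derivative_transform_within_open[OF D4])
    show "open {..<\<theta> / (a * k)}" by simp
    show "s \<in> {..<\<theta> / (a * k)}" using s unfolding \<theta>_def by simp
    fix s' assume "s' \<in> {..<\<theta> / (a * k)}"
    then have "a * k * s' < \<theta>" using ak by (simp add: pos_less_divide_eq mult.commute)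
    then show "tan (\<theta> - a * k * s') powr (1 / a) = \<rho> k x0 s'"
      unfolding \<rho>_def \<theta>_def[symmetric] by simp
  qed
qed


lemma rho_zero:
  assumes k: "k > 0" and s: "arctan (norm (g x0) powr a) / (a * k) \<le> s"
  shows "\<rho> k x0 s = 0"
proof -
  have ak: "a * k > 0" using a_pos k by simp
  have "arctan (norm (g x0) powr a) \<le> a * k * s" using s ak by (simp add: pos_divide_le_eq mult.commute)
  then show ?thesis unfolding \<rho>_def by simp
qed

lemma rho_cont:
  assumes k: "k > 0"
  shows "continuous_on {0..t} (\<rho> k x0)"
proof -
  define \<theta> where "\<theta> = arctan (norm (g x0) powr a)"
  have ak: "a * k > 0" using a_pos k by simp
  have th: "0 \<le> \<theta>" "\<theta> < pi / 2" unfolding \<theta>_def using arctan_bounded by auto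
  have m: "0 \<le> max 0 (\<theta> - a * k * s)" "max 0 (\<theta> - a * k * s) < pi / 2" if "s \<in> {0..t}" for s
  proof -
    have "0 \<le> a * k * s" using that ak by simp
    then show "0 \<le> max 0 (\<theta> - a * k * s)" "max 0 (\<theta> - a * k * s) < pi / 2" using th pi_gt_zero by (auto simp: max_def)
  qed
  have "continuous_on {0..t} (\<lambda>s. tan (max 0 (\<theta> - a * k * s)) powr (1 / a))"
  proof (intro continuous_on_powr' continuous_intros ballI conjI impI)
    fix s assume "s \<in> {0..t}"
    have "0 < cos (max 0 (\<theta> - a * k * s))"
      by (rule cos_gt_zero_pi) (use m[OF \<open>s \<in> {0..t}\<close>] pi_gt_zero in linarith)+
    then show "cos (max 0 (\<theta> - a * k * s)) \<noteq> 0" by simp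
    from m[OF \<open>s \<in> {0..t}\<close>] show "0 \<le> tan (max 0 (\<theta> - a * k * s))" by (rule tan_pos_pi2_le)
    show "0 < 1 / a" using a_pos by simp
  qed
  then show ?thesis unfolding \<rho>_def \<theta>_def .
qed

lemma rho_nonneg: "\<rho> k x0 s \<ge> 0"
  unfolding \<rho>_def by simp

lemma Phi_deriv:
  assumes k: "k > 0" and s: "0 \<le> s" "s < arctan (norm (g x0) powr a) / (a * k)"
  shows "((\<lambda>s. ginv (\<rho> k x0 s *\<^sub>R sgn (g x0))) has_vector_derivative Fk k (ginv (\<rho> k x0 s *\<^sub>R sgn (g x0)))) (at s)"
proof -
  let ?c = "sgn (g x0)"
  let ?P = "\<rho> k x0 s *\<^sub>R ?c"
  let ?d = "- (cf k ?P * \<rho> k x0 s)"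
  have vd: "((\<lambda>s. \<rho> k x0 s *\<^sub>R ?c) has_vector_derivative ?d *\<^sub>R ?c) (at s)"
    using has_vector_derivative_scaleR[OF rho_deriv[OF k s] has_vector_derivative_const[of ?c]] by simp
  have "(ginv \<circ> (\<lambda>s. \<rho> k x0 s *\<^sub>R ?c) has_derivative Hi (ginv ?P) \<circ> (\<lambda>x. x *\<^sub>R (?d *\<^sub>R ?c))) (at s)"
    using vd ginv_deriv[of ?P] unfolding has_vector_derivative_def by (rule diff_chain_at)
  moreover have "Hi (ginv ?P) (x *\<^sub>R (?d *\<^sub>R ?c)) = x *\<^sub>R Fk k (ginv ?P)" for x
  proof -
    have L: "linear (Hi (ginv ?P))" by (rule Hinv_linear)
    have "x *\<^sub>R (?d *\<^sub>R ?c) = - (x *\<^sub>R (cf k (g (ginv ?P)) *\<^sub>R g (ginv ?P)))"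
      by (simp add: g_ginv)
    then show ?thesis unfolding F_eq by (simp add: linear_neg[OF L] linear_scale[OF L])
  qed
  ultimately show ?thesis unfolding has_vector_derivative_def by (simp add: o_def)
qed

lemma existence:
  assumes k: "k > 0"
  shows "\<exists>x. ode_solution (Fk k) x0 x"
proof (cases "x0 = xs")
  case True
  have "ode_solution (Fk k) x0 (\<lambda>t. xs)"
    unfolding ode_solution_def using True F_xs by simp
  then show ?thesis by blast
next
  case False
  define \<theta> where "\<theta> = arctan (norm (g x0) powr a)"
  define T0 where "T0 = \<theta> / (a * k)"
  define X where "X t = ginv (\<rho> k x0 t *\<^sub>R sgn (g x0))" for t
  have ak: "a * k > 0" using a_pos k by simp
  have gx0: "g x0 \<noteq> 0" using False g_zero_iff by simp
  have th: "\<theta> > 0" "\<theta> < pi / 2" unfolding \<theta>_def using gx0 arctan_bounded by auto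
  have nsg: "norm (sgn (g x0)) = 1" using gx0 by (simp add: norm_sgn)
  have X0: "X 0 = x0"
  proof -
    have e: "tan \<theta> = norm (g x0) powr a" unfolding \<theta>_def by (rule tan_arctan)
    have "\<rho> k x0 0 = tan \<theta> powr (1 / a)"
      unfolding \<rho>_def \<theta>_def[symmetric] using th by simp
    also have "\<dots> = (norm (g x0) powr a) powr (1 / a)" unfolding e ..
    also have "\<dots> = norm (g x0)" using a_pos by (simp add: powr_powr)
    finally show ?thesis unfolding X_def using gx0 by (simp add: sgn_div_norm ginv_g)
  qed
  have Xlate: "X s = xs" if "T0 \<le> s" for s
  proof -
    have "arctan (norm (g x0) powr a) / (a * k) \<le> s" using that unfolding T0_def \<theta>_def by simp
    then show ?thesis unfolding X_def using rho_zero[OF k] ginv_0 by simp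
  qed
  have contX: "continuous_on {0..t} X" for t
    unfolding X_def
    by (rule continuous_on_compose2[OF ginv_cont _ subset_UNIV]) (intro continuous_intros rho_cont[OF k])
  have derX: "(X has_vector_derivative Fk k (X s)) (at s)" if "0 < s" "s \<noteq> T0" for s
  proof (cases "s < T0")
    case True
    have s': "s < arctan (norm (g x0) powr a) / (a * k)" using True unfolding T0_def \<theta>_def .
    show ?thesis unfolding X_def using Phi_deriv[OF k _ s'] that(1) by simp
  next
    case False
    with that have sT: "T0 < s" by simp
    have "((\<lambda>_. xs) has_vector_derivative 0) (at s)" by simp
    then have "(X has_vector_derivative 0) (at s)"
    proof (rule has_vector_derivative_transform_within_open[of _ _ _ "{T0<..}"])
      show "open {T0<..}" by simp
      show "s \<in> {T0<..}" using sT by simp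
      fix y assume "y \<in> {T0<..}" then show "xs = X y" using Xlate[of y] by simp
    qed
    then show ?thesis using Xlate[of s] sT F_xs by simp
  qed
  define \<beta> where "\<beta> s = cf k (\<rho> k x0 s *\<^sub>R sgn (g x0)) * \<rho> k x0 s / mc" for s
  have der\<beta>: "((\<lambda>s. - \<rho> k x0 s / mc) has_vector_derivative \<beta> s) (at s)" if "0 < s" "s \<noteq> T0" for s
  proof (cases "s < T0")
    case True
    have s': "s < arctan (norm (g x0) powr a) / (a * k)" using True unfolding T0_def \<theta>_def .
    have "((\<lambda>s. - \<rho> k x0 s / mc) has_real_derivative - (- (cf k (\<rho> k x0 s *\<^sub>R sgn (g x0)) * \<rho> k x0 s)) / mc) (at s)"
      using rho_deriv[OF k _ s'] that(1)
      by (intro DERIV_cdivide DERIV_minus) simp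
    then show ?thesis unfolding \<beta>_def has_real_derivative_iff_has_vector_derivative[symmetric] by simp
  next
    case False
    with that have sT: "T0 < s" by simp
    have "((\<lambda>_. 0::real) has_vector_derivative 0) (at s)" by simp
    then have "((\<lambda>s. - \<rho> k x0 s / mc) has_vector_derivative 0) (at s)"
    proof (rule has_vector_derivative_transform_within_open[of _ _ _ "{T0<..}"])
      show "open {T0<..}" by simp
      show "s \<in> {T0<..}" using sT by simp
      fix y assume "y \<in> {T0<..}"
      then have "arctan (norm (g x0) powr a) / (a * k) \<le> y" unfolding T0_def \<theta>_def by simp
      then show "0 = - \<rho> k x0 y / mc" using rho_zero[OF k] by simp
    qed
    moreover have "arctan (norm (g x0) powr a) / (a * k) \<le> s" using sT unfolding T0_def \<theta>_def by simp
    ultimately show ?thesis unfolding \<beta>_def using rho_zero[OF k] by simp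
  qed
  have "ode_solution (Fk k) x0 X"
    unfolding ode_solution_def
  proof (intro conjI allI impI)
    show "X 0 = x0" by (rule X0)
    fix t :: real assume t: "0 \<le> t"
    have HI: "((\<lambda>s. Fk k (X s)) has_integral (X t - X 0)) {0..t}"
    proof (rule fundamental_theorem_of_calculus_interior_strong[of "{T0}"])
      show "finite {T0}" by simp
      show "0 \<le> t" by (rule t)
      show "continuous_on {0..t} X" by (rule contX)
      fix s assume "s \<in> {0<..<t} - {T0}"
      then show "(X has_vector_derivative Fk k (X s)) (at s)" by (intro derX) auto
    qed
    have HB: "(\<beta> has_integral ((- \<rho> k x0 t / mc) - (- \<rho> k x0 0 / mc))) {0..t}"
    proof (rule fundamental_theorem_of_calculus_interior_strong[of "{T0}"])
      show "finite {T0}" by simp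
      show "0 \<le> t" by (rule t)
      show "continuous_on {0..t} (\<lambda>s. - \<rho> k x0 s / mc)"
        using mc(1) by (intro continuous_intros rho_cont[OF k]) auto
      fix s assume "s \<in> {0<..<t} - {T0}"
      then show "((\<lambda>s. - \<rho> k x0 s / mc) has_vector_derivative \<beta> s) (at s)" by (intro der\<beta>) auto
    qed
    have bound: "norm (Fk k (X s)) \<le> \<beta> s" for s
    proof -
      have gX: "g (X s) = \<rho> k x0 s *\<^sub>R sgn (g x0)" unfolding X_def by (rule g_ginv)
      have cfn: "cf k (\<rho> k x0 s *\<^sub>R sgn (g x0)) \<ge> 0" unfolding cf_def using k by simp
      have "norm (Fk k (X s)) \<le> norm (cf k (g (X s)) *\<^sub>R g (X s)) / mc"
        unfolding F_eq norm_minus_cancel by (rule Hinv_bound)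
      also have "\<dots> = \<beta> s" unfolding gX \<beta>_def using cfn rho_nonneg[of k x0 s] nsg by simp
      finally show ?thesis .
    qed
    show "(\<lambda>s. Fk k (X s)) absolutely_integrable_on {0..t}"
    proof (rule absolutely_integrable_integrable_bound)
      fix s assume "s \<in> {0..t}" show "norm (Fk k (X s)) \<le> \<beta> s" by (rule bound)
    next
      show "(\<lambda>s. Fk k (X s)) integrable_on {0..t}" using HI by (rule has_integral_integrable)
    next
      show "\<beta> integrable_on {0..t}" using HB by (rule has_integral_integrable)
    qed
    show "X t = x0 + integral {0..t} (\<lambda>s. Fk k (X s))"
      using HI X0 by (simp add: integral_unique)
  qed
  then show ?thesis by blast
qed


lemma settle:
  assumes sol: "ode_solution (Fk k) x0 y" and k: "k > 0"
    and t: "arctan (norm (g x0) powr a) / (a * k) \<le> t"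
  shows "y t = xs"
proof -
  have ak: "a * k > 0" using a_pos k by simp
  have t0: "t \<ge> 0" using t ak by (meson arctan_bounded order.trans zero_le_arctan_iff norm_ge_zero
      powr_ge_zero divide_nonneg_pos)
  have "arctan (norm (g x0) powr a) \<le> a * k * t" using t ak by (simp add: pos_divide_le_eq mult.commute)
  then have "arctan (norm (g (y t)) powr a) = 0" using sol_h[OF sol k t0] by simp
  then show ?thesis using h_pos_iff[of "y t"] by auto
qed

lemma norm_decr:
  assumes sol: "ode_solution (Fk k) x0 y" and k: "k > 0" and t: "t \<ge> 0"
  shows "norm (g (y t)) \<le> norm (g x0)"
proof (rule ccontr)
  assume "\<not> ?thesis"
  then have "norm (g x0) powr a < norm (g (y t)) powr a"
    using a_pos by (intro powr_less_mono2) auto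
  then have "arctan (norm (g x0) powr a) < arctan (norm (g (y t)) powr a)" by (simp add: arctan_less_iff)
  also have "\<dots> = max 0 (arctan (norm (g x0) powr a) - a * k * t)" by (rule sol_h[OF sol k t])
  also have "\<dots> \<le> arctan (norm (g x0) powr a)" using a_pos k t by simp
  finally show False by simp
qed

end

theorem lemma5:
  fixes f :: "'a::euclidean_space \<Rightarrow> real"
    and g :: "'a \<Rightarrow> 'a"
    and H :: "'a \<Rightarrow> 'a \<Rightarrow>\<^sub>L 'a"
    and xs :: 'a
    and \<mu> :: real
  assumes grad: "\<And>x. (f has_derivative (\<lambda>h. g x \<bullet> h)) (at x)"
    and hess: "\<And>x. (g has_derivative blinfun_apply (H x)) (at x)"
    and hess_cont: "continuous_on UNIV H"
    and sconv: "strongly_convex_on UNIV f"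
    and hess_inv: "\<And>x. bij (blinfun_apply (H x))"
    and rad_unb: "filterlim (\<lambda>x. norm (g x)) at_top at_infinity"
    and minimizer: "\<And>x. f xs \<le> f x"
    and mu: "\<mu> > 1"
  shows "(\<forall>k>0. \<forall>x0. \<exists>x. ode_solution (ft_newton_field g H \<mu> k) x0 x \<and>
            (\<forall>y. ode_solution (ft_newton_field g H \<mu> k) x0 y \<longrightarrow> (\<forall>t\<ge>0. y t = x t)))
       \<and> (\<forall>Tp>0. fixed_time_stable (ft_newton_field g H \<mu> (\<mu> * pi / (4 * Tp))) xs Tp)"
proof -
  interpret ftn f g H xs \<mu>
    by unfold_locales (use grad hess hess_cont sconv hess_inv minimizer mu in auto)
  have P1: "\<exists>x. ode_solution (ft_newton_field g H \<mu> k) x0 x \<and>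
            (\<forall>y. ode_solution (ft_newton_field g H \<mu> k) x0 y \<longrightarrow> (\<forall>t\<ge>0. y t = x t))"
    if k: "k > 0" for k x0
  proof -
    obtain x where x: "ode_solution (ft_newton_field g H \<mu> k) x0 x" using existence[OF k] by blast
    have "\<forall>t\<ge>0. y t = x t" if y: "ode_solution (ft_newton_field g H \<mu> k) x0 y" for y
    proof (intro allI impI)
      fix t :: real assume t: "t \<ge> 0"
      have "g (y t) = g (x t)" using sol_char[OF y k t] sol_char[OF x k t] by simp
      then show "y t = x t" using g_inj by (simp add: inj_eq)
    qed
    with x show ?thesis by blast
  qed
  have P2: "fixed_time_stable (ft_newton_field g H \<mu> (\<mu> * pi / (4 * Tp))) xs Tp" if Tp: "Tp > 0" for Tp
  proof -
    define k where "k = \<mu> * pi / (4 * Tp)"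
    have k: "k > 0" unfolding k_def using mu Tp by simp
    have ak: "a * k = pi / (2 * Tp)" unfolding a_def k_def using mu by (simp add: field_simps)
    have settleT: "\<exists>T. 0 \<le> T \<and> T \<le> Tp \<and> (\<forall>t\<ge>T. y t = xs)"
      if y: "ode_solution (Fk k) x0 y" for x0 y
    proof (intro exI conjI allI impI)
      define T where "T = arctan (norm (g x0) powr a) / (a * k)"
      show "0 \<le> arctan (norm (g x0) powr a) / (a * k)" using a_pos k by simp
      have "arctan (norm (g x0) powr a) < pi / 2" using arctan_bounded by blast
      then have "arctan (norm (g x0) powr a) / (a * k) < (pi / 2) / (a * k)"
        using a_pos k by (intro divide_strict_right_mono) auto
      also have "\<dots> = (pi / 2) / (pi / (2 * Tp))" unfolding ak ..
      also have "\<dots> = Tp" using Tp by simp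
      finally show "arctan (norm (g x0) powr a) / (a * k) \<le> Tp" by simp
      fix t assume "arctan (norm (g x0) powr a) / (a * k) \<le> t"
      then show "y t = xs" by (rule settle[OF y k])
    qed
    show ?thesis
      unfolding fixed_time_stable_def k_def[symmetric]
    proof (intro conjI allI impI)
      fix \<epsilon> :: real assume e: "\<epsilon> > 0"
      have "isCont g xs" using g_cont by (simp add: continuous_on_eq_continuous_at)
      then obtain \<delta> where d: "\<delta> > 0" and dg: "\<And>x'. dist x' xs < \<delta> \<Longrightarrow> dist (g x') (g xs) < mc * \<epsilon>"
        unfolding continuous_at_eps_delta using e mc(1) by (meson mult_pos_pos)
      show "\<exists>\<delta>>0. \<forall>x0 x. ode_solution (Fk k) x0 x \<and> dist x0 xs < \<delta> \<longrightarrow> (\<forall>t\<ge>0. dist (x t) xs < \<epsilon>)"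
      proof (intro exI[of _ \<delta>] conjI allI impI d)
        fix x0 x and t :: real assume a1: "ode_solution (Fk k) x0 x \<and> dist x0 xs < \<delta>" and t: "0 \<le> t"
        have "norm (g x0) < mc * \<epsilon>" using dg[of x0] a1 g_xs by (simp add: dist_norm)
        moreover have "norm (g (x t)) \<le> norm (g x0)" using norm_decr[OF _ k t] a1 by blast
        moreover have "mc * norm (x t - xs) \<le> norm (g (x t))" using g_lip[of "x t" xs] g_xs by simp
        ultimately have "mc * norm (x t - xs) < mc * \<epsilon>" by linarith
        then show "dist (x t) xs < \<epsilon>" using mc(1) by (simp add: dist_norm)
      qed
    next
      fix x0 x assume sol: "ode_solution (Fk k) x0 x"
      obtain T where "\<forall>t\<ge>T. x t = xs" using settleT[OF sol] by blast
      then have "\<forall>\<^sub>F t in at_top. x t = xs" unfolding eventually_at_top_linorder by blast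
      then show "(x \<longlongrightarrow> xs) at_top" by (rule tendsto_eventually)
    next
      fix x0 x assume sol: "ode_solution (Fk k) x0 x"
      show "\<exists>T. 0 \<le> T \<and> T \<le> Tp \<and> (\<forall>t\<ge>T. x t = xs)" by (rule settleT[OF sol])
    qed
  qed
  show ?thesis using P1 P2 by blast
qed

end
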